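(* Let $\alpha=\frac{8}{97}(11-2\sqrt6)$. The function $$x\mapsto \frac{E(x)^2-(1-x)K(x)^2}{x^2K(x)}$$ is strictly increasing on $(0,\alpha)$, and for all $x\in(0,\alpha)$, $$E(x)^2-(1-x)K(x)^2\ge \frac{\pi}{16}\,x^2K(x).$$
   Context: $K(x)={\cal K}(\sqrt x)$ and $E(x)={\cal E}(\sqrt x)$ for $x\in[0,1)$, where ${\cal K}(r)=\int_0^{\pi/2}(1-r^2\sin^2t)^{-1/2}dt$ and ${\cal E}(r)=\int_0^{\pi/2}(1-r^2\sin^2t)^{1/2}dt$ are the complete elliptic integrals of the first and second kind. *)

theory Defs
  imports "HOL-Analysis.Analysis"
begin

text \<open>Complete elliptic integrals in the parameter convention of the paper:
  K(x) = cal K(sqrt x), E(x) = cal E(sqrt x), for x in [0,1).\<close>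

definition ellK :: "real \<Rightarrow> real" where
  "ellK x = integral {0..pi/2} (\<lambda>t. 1 / sqrt (1 - x * (sin t)\<^sup>2))"

definition ellE :: "real \<Rightarrow> real" where
  "ellE x = integral {0..pi/2} (\<lambda>t. sqrt (1 - x * (sin t)\<^sup>2))"

end

theory Submission imports Defs begin
lemma algF:
  fixes x s c r :: real
  assumes r: "r > 0" "r * r = 1 - x * s^2" and c: "c * c = 1 - s^2"
  shows "((c * c - s * s) * r - s * c * (inverse r / 2 * (- (x * (2 * s * c))))) / (r * r)
       = ((1 - s^2) - s^2) / r + x * s^2 * (1 - s^2) / ((1 - x * s^2) * r)"
proof -
  have u: "1 - x * s^2 > 0" using r by (metis mult_pos_pos)
  have "((c * c - s * s) * r - s * c * (inverse r / 2 * (- (x * (2 * s * c))))) / (r * r)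
      = ((c * c - s * s) + x * s^2 * (c * c) / (r * r)) / r"
    using r by (simp add: field_simps power2_eq_square)
  also have "\<dots> = ((1 - s^2) - s^2) / r + x * s^2 * (1 - s^2) / ((1 - x * s^2) * r)"
    unfolding c r(2) using u r(1) by (simp add: field_simps power2_eq_square)
  finally show ?thesis .
qed

lemma alg1:
  fixes x a r :: real
  assumes r: "r > 0" "r * r = 1 - x * a"
  shows "x * (1 - x) * (2 * (a / (2 * (1 - x * a) * r))) - r + (1 - x) * (1 / r)
       = - x * (((1 - a) - a) / r + x * a * (1 - a) / ((1 - x * a) * r))"
proof -
  have u: "1 - x * a > 0" using r by (metis mult_pos_pos)
  have "x * (1 - x) * (2 * (a / (2 * (1 - x * a) * r))) - r + (1 - x) * (1 / r)
      = (x * (1 - x) * a - (r * r) * (1 - x * a) + (1 - x) * (1 - x * a)) / ((1 - x * a) * r)"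
    using r u by (simp add: field_simps)
  also have "\<dots> = (- x * ((1 - 2 * a) * (1 - x * a) + x * a * (1 - a))) / ((1 - x * a) * r)"
    unfolding r(2) by (simp add: algebra_simps)
  also have "\<dots> = - x * (((1 - a) - a) / r + x * a * (1 - a) / ((1 - x * a) * r))"
    using r u by (simp add: field_simps)
  finally show ?thesis .
qed

lemma u_pos: fixes x t :: real assumes "-1 < x" "x < 1" shows "0 < 1 - x * (sin t)^2"
proof -
  have s: "0 \<le> (sin t)^2" "(sin t)^2 \<le> 1" by (auto simp: abs_square_le_1)
  show ?thesis
  proof (cases "x \<ge> 0")
    case True then have "x * (sin t)^2 \<le> x" using s mult_left_le by blast
    then show ?thesis using assms by linarith
  next
    case False then have "x * (sin t)^2 \<le> 0" using s by (simp add: mult_nonpos_nonneg)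
    then show ?thesis by linarith
  qed
qed

lemma u_ne: fixes x t :: real assumes "-1 < x" "x < 1" shows "x * (sin t)^2 \<noteq> 1"
  using u_pos[OF assms, of t] by simp

lemma Kint: assumes "-1 < x" "x < 1"
  shows "((\<lambda>t. 1 / sqrt (1 - x * (sin t)^2)) has_integral ellK x) {0..pi/2}"
proof -
  have "\<And>t. 0 < 1 - x * (sin t)^2" using u_pos assms by auto
  then show ?thesis unfolding ellK_def
    by (intro integrable_integral integrable_continuous_interval)
       (auto intro!: continuous_intros simp: less_imp_neq[symmetric])
qed

lemma Eint: assumes "-1 < x" "x < 1"
  shows "((\<lambda>t. sqrt (1 - x * (sin t)^2)) has_integral ellE x) {0..pi/2}"
  unfolding ellE_def
  by (intro integrable_integral integrable_continuous_interval)
     (auto intro!: continuous_intros)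

lemma dK1: "0 < 1 - x * (s::real) \<Longrightarrow> ((\<lambda>x. 1 / sqrt (1 - x * s)) has_real_derivative s / (2 * (1 - x * s) * sqrt (1 - x * s))) (at x within U)"
  apply (rule derivative_eq_intros refl | simp)+
  apply (auto simp: field_simps power2_eq_square)
  done

lemma dE1: "0 < 1 - x * (s::real) \<Longrightarrow> ((\<lambda>x. sqrt (1 - x * s)) has_real_derivative - s / (2 * sqrt (1 - x * s))) (at x within U)"
  apply (rule derivative_eq_intros refl | simp)+
  apply (simp add: divide_inverse)
  done

lemma K_deriv0: assumes "-1 < x0" "x0 < 1"
  shows "(ellK has_real_derivative integral {0..pi/2} (\<lambda>t. (sin t)^2 / (2 * (1 - x0 * (sin t)^2) * sqrt (1 - x0 * (sin t)^2)))) (at x0)"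
proof -
  let ?U = "{-1<..<1::real}"
  have "((\<lambda>x. integral (cbox 0 (pi/2)) (\<lambda>t. 1 / sqrt (1 - x * (sin t)^2))) has_field_derivative
     integral (cbox 0 (pi/2)) (\<lambda>t. (sin t)^2 / (2 * (1 - x0 * (sin t)^2) * sqrt (1 - x0 * (sin t)^2)))) (at x0 within ?U)"
  proof (rule leibniz_rule_field_derivative)
    fix x t :: real assume x: "x \<in> ?U" and t: "t \<in> cbox 0 (pi/2)"
    have up: "0 < 1 - x * (sin t)^2" using x u_pos by auto
    show "((\<lambda>x. 1 / sqrt (1 - x * (sin t)^2)) has_field_derivative (sin t)^2 / (2 * (1 - x * (sin t)^2) * sqrt (1 - x * (sin t)^2))) (at x within ?U)"
      by (rule dK1[OF up])
  next
    fix x :: real assume x: "x \<in> ?U"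
    show "(\<lambda>t. 1 / sqrt (1 - x * (sin t)^2)) integrable_on cbox 0 (pi/2)"
      using Kint[of x] x by auto
  next
    have "\<And>x t. x \<in> ?U \<Longrightarrow> 0 < 1 - x * (sin t)^2" using u_pos by auto
    then show "continuous_on (?U \<times> cbox 0 (pi/2)) (\<lambda>(x, t). (sin t)^2 / (2 * (1 - x * (sin t)^2) * sqrt (1 - x * (sin t)^2)))"
      by (auto intro!: continuous_intros simp: split_beta less_imp_neq[symmetric] u_ne)
  qed (use assms in auto)
  then show ?thesis unfolding ellK_def
    using assms by (simp add: at_within_open[of x0 ?U])
qed

lemma E_deriv0: assumes "-1 < x0" "x0 < 1"
  shows "(ellE has_real_derivative integral {0..pi/2} (\<lambda>t. (- ((sin t)^2)) / (2 * sqrt (1 - x0 * (sin t)^2)))) (at x0)"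
proof -
  let ?U = "{-1<..<1::real}"
  have "((\<lambda>x. integral (cbox 0 (pi/2)) (\<lambda>t. sqrt (1 - x * (sin t)^2))) has_field_derivative
     integral (cbox 0 (pi/2)) (\<lambda>t. (- ((sin t)^2)) / (2 * sqrt (1 - x0 * (sin t)^2)))) (at x0 within ?U)"
  proof (rule leibniz_rule_field_derivative)
    fix x t :: real assume x: "x \<in> ?U" and t: "t \<in> cbox 0 (pi/2)"
    have up: "0 < 1 - x * (sin t)^2" using x u_pos by auto
    show "((\<lambda>x. sqrt (1 - x * (sin t)^2)) has_field_derivative (- ((sin t)^2)) / (2 * sqrt (1 - x * (sin t)^2))) (at x within ?U)"
      by (rule dE1[OF up])
  next
    fix x :: real assume x: "x \<in> ?U"
    show "(\<lambda>t. sqrt (1 - x * (sin t)^2)) integrable_on cbox 0 (pi/2)"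
      using Eint[of x] x by auto
  next
    have "\<And>x t. x \<in> ?U \<Longrightarrow> 0 < 1 - x * (sin t)^2" using u_pos by auto
    then show "continuous_on (?U \<times> cbox 0 (pi/2)) (\<lambda>(x, t). (- ((sin t)^2)) / (2 * sqrt (1 - x * (sin t)^2)))"
      by (auto intro!: continuous_intros simp: split_beta less_imp_neq[symmetric])
  qed (use assms in auto)
  then show ?thesis unfolding ellE_def
    using assms by (simp add: at_within_open[of x0 ?U])
qed


lemma alg2:
  fixes x a r :: real
  assumes r: "r > 0" "r * r = 1 - x * a" "x \<noteq> 0"
  shows "- a / (2 * r) = (r - 1/r) / (2*x)"
  using r by (simp add: field_simps)

lemma Fderiv:
  fixes x t :: real assumes u: "0 < 1 - x * (sin t)^2"
  shows "((\<lambda>t. sin t * cos t / sqrt (1 - x * (sin t)^2)) has_real_derivative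
     (((1 - (sin t)^2) - (sin t)^2) / sqrt (1 - x * (sin t)^2) + x * (sin t)^2 * (1 - (sin t)^2) / ((1 - x * (sin t)^2) * sqrt (1 - x * (sin t)^2)))) (at t within S)"
proof -
  have d1: "((\<lambda>t. 1 - x * (sin t)^2) has_real_derivative - (x * (2 * sin t * cos t))) (at t within S)"
    by (auto intro!: derivative_eq_intros)
  have d2: "((\<lambda>t. sqrt (1 - x * (sin t)^2)) has_real_derivative inverse (sqrt (1 - x * (sin t)^2)) / 2 * (- (x * (2 * sin t * cos t)))) (at t within S)"
    by (rule DERIV_chain2[OF DERIV_real_sqrt[OF u] d1])
  have d3: "((\<lambda>t. sin t * cos t) has_real_derivative (cos t * cos t - sin t * sin t)) (at t within S)"
    by (auto intro!: derivative_eq_intros)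
  have sp: "sqrt (1 - x * (sin t)^2) > 0" using u by simp
  have "((\<lambda>t. sin t * cos t / sqrt (1 - x * (sin t)^2)) has_real_derivative
     ((cos t * cos t - sin t * sin t) * sqrt (1 - x * (sin t)^2) - sin t * cos t * (inverse (sqrt (1 - x * (sin t)^2)) / 2 * (- (x * (2 * sin t * cos t)))))
      / (sqrt (1 - x * (sin t)^2) * sqrt (1 - x * (sin t)^2))) (at t within S)"
    by (rule DERIV_divide[OF d3 d2]) (use sp in simp)
  moreover have "((cos t * cos t - sin t * sin t) * sqrt (1 - x * (sin t)^2) - sin t * cos t * (inverse (sqrt (1 - x * (sin t)^2)) / 2 * (- (x * (2 * sin t * cos t)))))
      / (sqrt (1 - x * (sin t)^2) * sqrt (1 - x * (sin t)^2)) = 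
     (((1 - (sin t)^2) - (sin t)^2) / sqrt (1 - x * (sin t)^2) + x * (sin t)^2 * (1 - (sin t)^2) / ((1 - x * (sin t)^2) * sqrt (1 - x * (sin t)^2)))"
  proof (rule algF)
    show "cos t * cos t = 1 - (sin t)^2" using sin_cos_squared_add[of t] unfolding power2_eq_square by linarith
    show "sqrt (1 - x * (sin t)^2) * sqrt (1 - x * (sin t)^2) = 1 - x * (sin t)^2" using u by simp
  qed (use sp in auto)
  ultimately show ?thesis by simp
qed

definition Fd :: "real \<Rightarrow> real \<Rightarrow> real" where
  "Fd x t = ((1 - (sin t)^2) - (sin t)^2) / sqrt (1 - x * (sin t)^2) + x * (sin t)^2 * (1 - (sin t)^2) / ((1 - x * (sin t)^2) * sqrt (1 - x * (sin t)^2))"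

lemma Fd_int: assumes "-1 < x" "x < 1" shows "(Fd x has_integral 0) {0..pi/2}"
proof -
  have "(Fd x has_integral ((\<lambda>t. sin t * cos t / sqrt (1 - x * (sin t)^2)) (pi/2) - (\<lambda>t. sin t * cos t / sqrt (1 - x * (sin t)^2)) 0)) {0..pi/2}"
    unfolding Fd_def
  proof (rule fundamental_theorem_of_calculus)
    fix t :: real assume "t \<in> {0..pi/2}"
    have u: "0 < 1 - x * (sin t)^2" using u_pos assms by auto
    show "((\<lambda>t. sin t * cos t / sqrt (1 - x * (sin t)^2)) has_vector_derivative
      ((1 - (sin t)^2 - (sin t)^2) / sqrt (1 - x * (sin t)^2) + x * (sin t)^2 * (1 - (sin t)^2) / ((1 - x * (sin t)^2) * sqrt (1 - x * (sin t)^2)))) (at t within {0..pi/2})"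
      using Fderiv[OF u] unfolding has_real_derivative_iff_has_vector_derivative .
  qed simp
  then show ?thesis by simp
qed

definition fK :: "real \<Rightarrow> real \<Rightarrow> real" where
  "fK x t = (sin t)^2 / (2 * (1 - x * (sin t)^2) * sqrt (1 - x * (sin t)^2))"
definition fE :: "real \<Rightarrow> real \<Rightarrow> real" where
  "fE x t = (- ((sin t)^2)) / (2 * sqrt (1 - x * (sin t)^2))"

lemma fK_int: assumes "-1 < x" "x < 1" shows "(fK x has_integral integral {0..pi/2} (fK x)) {0..pi/2}"
proof -
  have "\<And>t. 0 < 1 - x * (sin t)^2" using u_pos assms by auto
  then show ?thesis unfolding fK_def
    by (intro integrable_integral integrable_continuous_interval)
       (auto intro!: continuous_intros simp: less_imp_neq[symmetric] u_ne assms)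
qed

lemma fE_int: assumes "-1 < x" "x < 1" shows "(fE x has_integral integral {0..pi/2} (fE x)) {0..pi/2}"
proof -
  have "\<And>t. 0 < 1 - x * (sin t)^2" using u_pos assms by auto
  then show ?thesis unfolding fE_def
    by (intro integrable_integral integrable_continuous_interval)
       (auto intro!: continuous_intros simp: less_imp_neq[symmetric] u_ne assms)
qed

lemma K_ident: assumes "-1 < x" "x < 1"
  shows "x * (1 - x) * (2 * integral {0..pi/2} (fK x)) = ellE x - (1 - x) * ellK x"
proof -
  have h1: "((\<lambda>t. x * (1 - x) * (2 * fK x t) - sqrt (1 - x * (sin t)^2) + (1 - x) * (1 / sqrt (1 - x * (sin t)^2)))
     has_integral (x * (1 - x) * (2 * integral {0..pi/2} (fK x)) - ellE x + (1 - x) * ellK x)) {0..pi/2}"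
    by (intro has_integral_add has_integral_diff has_integral_mult_right fK_int Eint Kint assms)
  have h2: "((\<lambda>t. x * (1 - x) * (2 * fK x t) - sqrt (1 - x * (sin t)^2) + (1 - x) * (1 / sqrt (1 - x * (sin t)^2)))
     has_integral (- x * 0)) {0..pi/2}"
  proof -
    have "((\<lambda>t. - x * Fd x t) has_integral (- x * 0)) {0..pi/2}"
      by (intro has_integral_mult_right Fd_int assms)
    moreover have "\<And>t. - x * Fd x t = x * (1 - x) * (2 * fK x t) - sqrt (1 - x * (sin t)^2) + (1 - x) * (1 / sqrt (1 - x * (sin t)^2))"
    proof -
      fix t
      have u: "0 < 1 - x * (sin t)^2" using u_pos assms by auto
      show "- x * Fd x t = x * (1 - x) * (2 * fK x t) - sqrt (1 - x * (sin t)^2) + (1 - x) * (1 / sqrt (1 - x * (sin t)^2))"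
        unfolding Fd_def fK_def
        by (rule alg1[symmetric]) (use u in auto)
    qed
    ultimately show ?thesis by simp
  qed
  from has_integral_unique[OF h1 h2] show ?thesis by simp
qed

lemma E_ident: assumes "-1 < x" "x < 1" "x \<noteq> 0"
  shows "2 * x * integral {0..pi/2} (fE x) = ellE x - ellK x"
proof -
  have h1: "((\<lambda>t. sqrt (1 - x * (sin t)^2) - 1 / sqrt (1 - x * (sin t)^2)) has_integral (ellE x - ellK x)) {0..pi/2}"
    by (intro has_integral_diff Eint Kint assms)
  have h2: "((\<lambda>t. (2 * x) * fE x t) has_integral (2 * x * integral {0..pi/2} (fE x))) {0..pi/2}"
    by (intro has_integral_mult_right fE_int assms)
  have "\<And>t. (2 * x) * fE x t = sqrt (1 - x * (sin t)^2) - 1 / sqrt (1 - x * (sin t)^2)"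
  proof -
    fix t
    have u: "0 < 1 - x * (sin t)^2" using u_pos assms by auto
    have "fE x t = (sqrt (1 - x * (sin t)^2) - 1 / sqrt (1 - x * (sin t)^2)) / (2 * x)"
      unfolding fE_def by (rule alg2) (use u assms in auto)
    then show "(2 * x) * fE x t = sqrt (1 - x * (sin t)^2) - 1 / sqrt (1 - x * (sin t)^2)"
      using assms by simp
  qed
  with h2 have "((\<lambda>t. sqrt (1 - x * (sin t)^2) - 1 / sqrt (1 - x * (sin t)^2)) has_integral (2 * x * integral {0..pi/2} (fE x))) {0..pi/2}"
    by simp
  from has_integral_unique[OF this h1] show ?thesis .
qed

lemma K_deriv: assumes "0 < x" "x < 1"
  shows "(ellK has_real_derivative (ellE x - (1 - x) * ellK x) / (2 * x * (1 - x))) (at x)"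
proof -
  have "integral {0..pi/2} (fK x) = (ellE x - (1 - x) * ellK x) / (2 * x * (1 - x))"
    using K_ident[of x] assms by (simp add: field_simps)
  then show ?thesis using K_deriv0[of x] assms unfolding fK_def by simp
qed

lemma E_deriv: assumes "0 < x" "x < 1"
  shows "(ellE has_real_derivative (ellE x - ellK x) / (2 * x)) (at x)"
proof -
  have "integral {0..pi/2} (fE x) = (ellE x - ellK x) / (2 * x)"
    using E_ident[of x] assms by (simp add: field_simps)
  then show ?thesis using E_deriv0[of x] assms unfolding fE_def by simp
qed


lemma const_int: "((\<lambda>t. c) has_integral (c * (pi/2))) {0..pi/2::real}"
  using has_integral_const_real[of c 0 "pi/2"] by (simp add: mult.commute)

lemma K0: "ellK 0 = pi/2"
  using has_integral_unique[OF _ const_int[of 1]] Kint[of 0] by simp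
lemma E0: "ellE 0 = pi/2"
  using has_integral_unique[OF _ const_int[of 1]] Eint[of 0] by simp

lemma K_cont: "-1 < x \<Longrightarrow> x < 1 \<Longrightarrow> isCont ellK x"
  using K_deriv0 DERIV_isCont by blast
lemma E_cont: "-1 < x \<Longrightarrow> x < 1 \<Longrightarrow> isCont ellE x"
  using E_deriv0 DERIV_isCont by blast

lemma K_ge: assumes "0 \<le> x" "x < 1" shows "ellK x \<ge> pi/2"
proof -
  have "1 * (pi/2) \<le> ellK x"
  proof (rule has_integral_le[OF const_int Kint])
    fix t :: real
    have u: "0 < 1 - x * (sin t)^2" using u_pos assms by auto
    have "1 - x * (sin t)^2 \<le> 1" using assms by simp
    then have "sqrt (1 - x * (sin t)^2) \<le> 1" by simp
    then show "1 \<le> 1 / sqrt (1 - x * (sin t)^2)" using u by (simp add: field_simps)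
  qed (use assms in auto)
  then show ?thesis by simp
qed

lemma K_pos: "0 \<le> x \<Longrightarrow> x < 1 \<Longrightarrow> ellK x > 0"
  using K_ge[of x] pi_gt_zero by linarith

lemma E_pos: assumes "0 \<le> x" "x < 1" shows "ellE x > 0"
proof -
  have "sqrt (1 - x) * (pi/2) \<le> ellE x"
  proof (rule has_integral_le[OF const_int Eint])
    fix t :: real
    have "(sin t)^2 \<le> 1" by (simp add: abs_square_le_1)
    then have "x * (sin t)^2 \<le> x" using assms mult_left_le by blast
    then show "sqrt (1 - x) \<le> sqrt (1 - x * (sin t)^2)" by simp
  qed (use assms in auto)
  moreover have "sqrt (1 - x) * (pi/2) > 0" using assms by simp
  ultimately show ?thesis by linarith
qed

lemma sin2_int: "((\<lambda>t. (sin t)^2) has_integral (pi/4)) {0..pi/2}"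
proof -
  have "((\<lambda>t. (sin t)^2) has_integral ((\<lambda>t. t/2 - sin t * cos t / 2) (pi/2) - (\<lambda>t. t/2 - sin t * cos t / 2) 0)) {0..pi/2}"
  proof (rule fundamental_theorem_of_calculus)
    fix t :: real assume "t \<in> {0..pi/2}"
    have cc: "cos t * cos t = 1 - (sin t)^2" using sin_cos_squared_add[of t] unfolding power2_eq_square by linarith
    have "((\<lambda>t. t/2 - sin t * cos t / 2) has_real_derivative (1/2 - (cos t * cos t - sin t * sin t) / 2)) (at t within {0..pi/2})"
      by (auto intro!: derivative_eq_intros)
    moreover have "1/2 - (cos t * cos t - sin t * sin t) / 2 = (sin t)^2" unfolding cc by (simp add: power2_eq_square field_simps)
    ultimately show "((\<lambda>t. t/2 - sin t * cos t / 2) has_vector_derivative (sin t)^2) (at t within {0..pi/2})"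
      unfolding has_real_derivative_iff_has_vector_derivative by simp
  qed simp
  then show ?thesis by simp
qed

lemma KE_gap: assumes "0 \<le> x" "x < 1" shows "ellK x - ellE x \<ge> pi/4 * x"
proof -
  have h: "((\<lambda>t. 1 / sqrt (1 - x * (sin t)^2) - sqrt (1 - x * (sin t)^2)) has_integral (ellK x - ellE x)) {0..pi/2}"
    by (intro has_integral_diff Eint Kint) (use assms in auto)
  have "x * (pi/4) \<le> ellK x - ellE x"
  proof (rule has_integral_le[OF has_integral_mult_right[OF sin2_int] h])
    fix t :: real
    have u: "0 < 1 - x * (sin t)^2" using u_pos assms by auto
    have r: "sqrt (1 - x * (sin t)^2) \<le> 1" using assms by simp
    have r0: "sqrt (1 - x * (sin t)^2) > 0" using u by simp
    have "1 / sqrt (1 - x * (sin t)^2) - sqrt (1 - x * (sin t)^2) = x * (sin t)^2 / sqrt (1 - x * (sin t)^2)"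
      using u r0 by (simp add: field_simps)
    also have "\<dots> \<ge> x * (sin t)^2"
      using r r0 assms by (simp add: le_divide_eq mult_left_le)
    finally show "x * (sin t)^2 \<le> 1 / sqrt (1 - x * (sin t)^2) - sqrt (1 - x * (sin t)^2)" .
  qed
  then show ?thesis by (simp add: mult.commute)
qed

definition hh :: "real \<Rightarrow> real" where "hh x = (16 - 16 * x + 3 * x^2) / (8 * (2 - x))"
definition hdv :: "real \<Rightarrow> real" where "hdv x = ((-16 + 6 * x) * (16 - 8 * x) + 8 * (16 - 16 * x + 3 * x^2)) / (64 * (2 - x) * (2 - x))"
definition DD :: "real \<Rightarrow> real" where "DD x = (3 * ln (1 - x) + 2 * ln (2 - x)) / 8"
definition Dd :: "real \<Rightarrow> real" where "Dd x = (3 * (- 1 / (1 - x)) + 2 * (- 1 / (2 - x))) / 8"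
definition tt :: "real \<Rightarrow> real" where "tt x = ellE x / ellK x"
definition ww :: "real \<Rightarrow> real" where "ww x = (hh x - tt x) * exp (- DD x)"

lemma hh_deriv: assumes x: "x < 2" shows "(hh has_real_derivative hdv x) (at x)"
proof -
  have nz: "8 * (2 - x) \<noteq> 0" using x by simp
  have d1: "((\<lambda>x. 16 - 16 * x + 3 * x^2) has_real_derivative (-16 + 6 * x)) (at x)"
    by (auto intro!: derivative_eq_intros)
  have d2: "((\<lambda>x. 8 * (2 - x)) has_real_derivative (-8)) (at x)"
    by (auto intro!: derivative_eq_intros)
  have "(hh has_real_derivative ((-16 + 6 * x) * (8 * (2 - x)) - (16 - 16 * x + 3 * x^2) * (-8)) / ((8 * (2 - x)) * (8 * (2 - x)))) (at x)"
    unfolding hh_def by (rule DERIV_divide[OF d1 d2 nz])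
  moreover have "((-16 + 6 * x) * (8 * (2 - x)) - (16 - 16 * x + 3 * x^2) * (-8)) / ((8 * (2 - x)) * (8 * (2 - x))) = hdv x"
    unfolding hdv_def by (simp add: algebra_simps)
  ultimately show ?thesis by simp
qed

lemma DD_deriv: assumes x: "x < 1" shows "(DD has_real_derivative Dd x) (at x)"
proof -
  have d1: "((\<lambda>x. ln (1 - x)) has_real_derivative (- 1 / (1 - x))) (at x)"
    using x by (auto intro!: derivative_eq_intros simp: divide_inverse)
  have d2: "((\<lambda>x. ln (2 - x)) has_real_derivative (- 1 / (2 - x))) (at x)"
    using x by (auto intro!: derivative_eq_intros simp: divide_inverse)
  show ?thesis unfolding DD_def Dd_def
    by (intro DERIV_cdivide DERIV_add DERIV_cmult d1 d2)
qed

lemma tt_deriv: assumes "0 < x" "x < 1"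
  shows "(tt has_real_derivative ((2 * tt x - 1) * (1 - x) - (tt x)^2) / (2 * x * (1 - x))) (at x)"
proof -
  have K: "ellK x > 0" using K_pos assms by auto
  have "(tt has_real_derivative ((ellE x - ellK x) / (2 * x) * ellK x - ellE x * ((ellE x - (1 - x) * ellK x) / (2 * x * (1 - x)))) / (ellK x * ellK x)) (at x)"
    unfolding tt_def using K by (intro DERIV_divide E_deriv K_deriv assms) auto
  moreover have "((ellE x - ellK x) / (2 * x) * ellK x - ellE x * ((ellE x - (1 - x) * ellK x) / (2 * x * (1 - x)))) / (ellK x * ellK x)
     = ((2 * tt x - 1) * (1 - x) - (tt x)^2) / (2 * x * (1 - x))"
    unfolding tt_def using K assms by (simp add: field_simps power2_eq_square)
  ultimately show ?thesis by simp
qed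

lemma key_gen: fixes x t p q :: real
  assumes p: "p = 2 - x" and q: "q = 1 - x" and nz: "p \<noteq> 0" "q \<noteq> 0" "x \<noteq> 0"
  shows "(((-16 + 6 * x) * (16 - 8 * x) + 8 * (16 - 16 * x + 3 * x^2)) / (64 * p * p) - ((2 * t - 1) * q - t^2) / (2 * x * q)
        - ((3 * (- 1 / q) + 2 * (- 1 / p)) / 8) * ((16 - 16 * x + 3 * x^2) / (8 * p) - t)) * (2 * x * q)
     = 9 * x^4 / (64 * p * p) + ((16 - 16 * x + 3 * x^2) / (8 * p) - t)^2"
proof -
  have "(((-16 + 6 * x) * (16 - 8 * x) + 8 * (16 - 16 * x + 3 * x^2)) / (64 * p * p) - ((2 * t - 1) * q - t^2) / (2 * x * q)
        - ((3 * (- 1 / q) + 2 * (- 1 / p)) / 8) * ((16 - 16 * x + 3 * x^2) / (8 * p) - t)) * (2 * x * q) * (64 * p * p)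
     = (9 * x^4 / (64 * p * p) + ((16 - 16 * x + 3 * x^2) / (8 * p) - t)^2) * (64 * p * p)"
    using nz by (simp add: field_simps power2_eq_square power4_eq_xxxx) (simp add: p q algebra_simps)
  then show ?thesis using nz by simp
qed

lemma key_ident: assumes "0 < x" "x < 1"
  shows "(hdv x - ((2 * t - 1) * (1 - x) - t^2) / (2 * x * (1 - x)) - Dd x * (hh x - t)) * (2 * x * (1 - x))
     = 9 * x^4 / (64 * (2 - x) * (2 - x)) + (hh x - t)^2"
  unfolding hdv_def Dd_def hh_def
  by (rule key_gen[of "2 - x" x "1 - x"]) (use assms in auto)

lemma ww_deriv: assumes "0 < x" "x < 1"
  shows "\<exists>y. (ww has_real_derivative y) (at x) \<and> y > 0"
proof -
  define T where "T = ((2 * tt x - 1) * (1 - x) - (tt x)^2) / (2 * x * (1 - x))"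
  have "(ww has_real_derivative ((hh x - tt x) * (exp (- DD x) * (- Dd x)) + (hdv x - T) * exp (- DD x))) (at x)"
    unfolding ww_def T_def
    by (intro DERIV_mult' DERIV_diff hh_deriv tt_deriv DERIV_chain2[OF DERIV_exp] DERIV_minus DD_deriv) (use assms in auto)
  moreover have "(hh x - tt x) * (exp (- DD x) * (- Dd x)) + (hdv x - T) * exp (- DD x)
     = exp (- DD x) * (hdv x - T - Dd x * (hh x - tt x))"
    by (simp add: algebra_simps)
  moreover have "hdv x - T - Dd x * (hh x - tt x) = (9 * x^4 / (64 * (2 - x) * (2 - x)) + (hh x - tt x)^2) / (2 * x * (1 - x))"
    using key_ident[OF assms, of "tt x"] assms unfolding T_def by (simp add: eq_divide_eq)
  moreover have "(9 * x^4 / (64 * (2 - x) * (2 - x)) + (hh x - tt x)^2) / (2 * x * (1 - x)) > 0"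
    using assms by (intro divide_pos_pos add_pos_nonneg) auto
  ultimately show ?thesis by (metis exp_gt_zero mult_pos_pos)
qed


lemma ww_pos: assumes "0 < x" "x < 1" shows "tt x < hh x"
proof -
  have c: "continuous_on {0..x} ww"
  proof (rule continuous_at_imp_continuous_on, rule ballI)
    fix y assume y: "y \<in> {0..x}"
    then have y1: "-1 < y" "y < 1" "0 \<le> y" using assms by auto
    have "isCont hh y" using y1 by (intro DERIV_isCont[OF hh_deriv]) auto
    moreover have "isCont DD y" using y1 by (intro DERIV_isCont[OF DD_deriv]) auto
    moreover have "isCont tt y" unfolding tt_def
      using y1 K_pos[of y] by (intro isCont_divide E_cont K_cont) auto
    ultimately show "isCont ww y" unfolding ww_def
      by (intro isCont_mult isCont_diff isCont_exp' isCont_minus) auto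
  qed
  have "ww 0 < ww x"
    by (rule DERIV_pos_imp_increasing_open[OF assms(1) _ c]) (use ww_deriv assms in auto)
  moreover have "ww 0 = 0" unfolding ww_def tt_def hh_def by (simp add: K0 E0)
  ultimately have "(hh x - tt x) * exp (- DD x) > 0" unfolding ww_def by simp
  then show ?thesis by (simp add: zero_less_mult_iff)
qed

lemma poly_pos: fixes x :: real assumes "0 < x" "x < 3/5" shows "256 - 640 * x + 456 * x^2 - 99 * x^3 > 0"
proof -
  have a: "x^3 \<le> 3/5 * x^2" using assms by (simp add: power3_eq_cube power2_eq_square mult_right_mono)
  have "(80/99 - x)^2 \<ge> (1/5)^2" using assms by (intro power_mono) auto
  moreover have "(80/99 - x)^2 = x^2 - 160/99 * x + 6400/9801" by (simp add: power2_eq_square algebra_simps)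
  ultimately have b: "x^2 \<ge> 1/25 + 160/99 * x - 6400/9801" by (simp add: power2_eq_square)
  have c: "x^2 \<ge> 0" by simp
  from a b c show ?thesis by linarith
qed

lemma gh_gen: fixes x p :: real assumes p: "p = 2 - x" "p \<noteq> 0"
  shows "(3 * (1 - x)^2 + 2 * (1 - x) - 3 * (1 - x) * ((16 - 16 * x + 3 * x^2) / (8 * p))
         - (1 - x) * ((16 - 16 * x + 3 * x^2) / (8 * p))^2 - ((16 - 16 * x + 3 * x^2) / (8 * p))^3)
       = x^3 * (256 - 640 * x + 456 * x^2 - 99 * x^3) / (512 * p^3)"
proof -
  have "(3 * (1 - x)^2 + 2 * (1 - x) - 3 * (1 - x) * ((16 - 16 * x + 3 * x^2) / (8 * p))
         - (1 - x) * ((16 - 16 * x + 3 * x^2) / (8 * p))^2 - ((16 - 16 * x + 3 * x^2) / (8 * p))^3) * (512 * p^3)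
       = x^3 * (256 - 640 * x + 456 * x^2 - 99 * x^3)"
    using p(2) by (simp add: field_simps power2_eq_square power3_eq_cube) (simp add: p(1) algebra_simps)
  then show ?thesis using p(2) by (simp add: eq_divide_eq)
qed

lemma g_pos: fixes x t :: real assumes x: "0 < x" "x < 3/5" and t: "0 < t" "t < hh x"
  shows "3 * (1 - x)^2 + 2 * (1 - x) - 3 * (1 - x) * t - (1 - x) * t^2 - t^3 > 0"
proof -
  let ?h = "hh x" and ?r = "1 - x"
  have gh: "3 * ?r^2 + 2 * ?r - 3 * ?r * ?h - ?r * ?h^2 - ?h^3 > 0"
  proof -
    have nz: "2 - x \<noteq> 0" using x by simp
    show ?thesis
      unfolding hh_def gh_gen[where x=x and p="2 - x", OF refl nz] using x poly_pos[OF x]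
      by (intro divide_pos_pos mult_pos_pos) auto
  qed
  have "(3 * ?r^2 + 2 * ?r - 3 * ?r * t - ?r * t^2 - t^3) - (3 * ?r^2 + 2 * ?r - 3 * ?r * ?h - ?r * ?h^2 - ?h^3)
     = (?h - t) * (3 * ?r + ?r * (?h + t) + ?h^2 + ?h * t + t^2)"
    by (simp add: algebra_simps power2_eq_square power3_eq_cube)
  moreover have "(?h - t) * (3 * ?r + ?r * (?h + t) + ?h^2 + ?h * t + t^2) > 0"
    using x t by (intro mult_pos_pos add_pos_nonneg) auto
  ultimately show ?thesis using gh by linarith
qed


definition NN :: "real \<Rightarrow> real" where "NN x = (ellE x)^2 - (1 - x) * (ellK x)^2"
definition ff :: "real \<Rightarrow> real" where "ff x = NN x / (x^2 * ellK x)"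

lemma NN_alg: fixes E K x :: real assumes "0 < x" "x < 1"
  shows "E * ((E - K) / (2 * x)) + (E - K) / (2 * x) * E - ((1 - x) * (K * ((E - (1 - x) * K) / (2 * x * (1 - x))) + (E - (1 - x) * K) / (2 * x * (1 - x)) * K) + (-1) * (K * K))
     = (E - K)^2 / x"
proof -
  have gen: "\<And>q. q = 1 - x \<Longrightarrow> q \<noteq> 0 \<Longrightarrow> E * ((E - K) / (2 * x)) + (E - K) / (2 * x) * E - (q * (K * ((E - q * K) / (2 * x * q)) + (E - q * K) / (2 * x * q) * K) + (-1) * (K * K))
     = (E - K)^2 / x"
    using assms apply (simp add: field_simps power2_eq_square)
    apply algebra
    done
  show ?thesis using gen[of "1 - x"] assms by simp
qed

lemma NN_deriv: assumes "0 < x" "x < 1" shows "(NN has_real_derivative (ellE x - ellK x)^2 / x) (at x)"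
proof -
  have e: "NN = (\<lambda>y. ellE y * ellE y - (1 - y) * (ellK y * ellK y))" by (auto simp: NN_def power2_eq_square)
  have d1: "((\<lambda>y. 1 - y) has_real_derivative -1) (at x)" by (auto intro!: derivative_eq_intros)
  have "((\<lambda>y. ellE y * ellE y - (1 - y) * (ellK y * ellK y)) has_real_derivative
     (ellE x * ((ellE x - ellK x) / (2 * x)) + (ellE x - ellK x) / (2 * x) * ellE x)
     - ((1 - x) * (ellK x * ((ellE x - (1 - x) * ellK x) / (2 * x * (1 - x))) + (ellE x - (1 - x) * ellK x) / (2 * x * (1 - x)) * ellK x) + (-1) * (ellK x * ellK x))) (at x)"
    by (intro DERIV_diff DERIV_mult' d1 E_deriv K_deriv assms)
  then show ?thesis unfolding e NN_alg[OF assms] by simp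
qed

lemma Dn_deriv: assumes "0 < x" "x < 1"
  shows "((\<lambda>y. y^2 * ellK y) has_real_derivative (x^2 * ((ellE x - (1 - x) * ellK x) / (2 * x * (1 - x))) + 2 * x * ellK x)) (at x)"
proof -
  have d1: "((\<lambda>y. y^2) has_real_derivative 2 * x) (at x)" by (auto intro!: derivative_eq_intros)
  show ?thesis by (intro DERIV_mult' d1 K_deriv assms)
qed

lemma fd_alg: fixes E K x :: real assumes "K > 0" "0 < x" "x < 1"
  shows "(E - K)^2 / x * (x^2 * K) - (E^2 - (1 - x) * K^2) * (x^2 * ((E - (1 - x) * K) / (2 * x * (1 - x))) + 2 * x * K)
    = x / (2 * (1 - x)) * (K^3 * (3 * (1 - x)^2 + 2 * (1 - x) - 3 * (1 - x) * (E / K) - (1 - x) * (E / K)^2 - (E / K)^3))"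
  using assms by (simp add: field_simps power2_eq_square power3_eq_cube)

lemma ff_deriv: assumes "0 < x" "x < 3/5" shows "\<exists>y. (ff has_real_derivative y) (at x) \<and> y > 0"
proof -
  have x1: "x < 1" using assms by simp
  have K: "ellK x > 0" using K_pos assms by simp
  have E: "ellE x > 0" using E_pos assms by simp
  have nz: "x^2 * ellK x \<noteq> 0" using K assms by simp
  have d: "(ff has_real_derivative
      ((ellE x - ellK x)^2 / x * (x^2 * ellK x) - NN x * (x^2 * ((ellE x - (1 - x) * ellK x) / (2 * x * (1 - x))) + 2 * x * ellK x))
      / ((x^2 * ellK x) * (x^2 * ellK x))) (at x)"
    unfolding ff_def[abs_def] by (rule DERIV_divide[OF NN_deriv[OF assms(1) x1] Dn_deriv[OF assms(1) x1] nz])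
  have tpos: "0 < tt x" "tt x < hh x" using ww_pos[OF assms(1) x1] K E by (auto simp: tt_def)
  have g: "3 * (1 - x)^2 + 2 * (1 - x) - 3 * (1 - x) * tt x - (1 - x) * (tt x)^2 - (tt x)^3 > 0"
    by (rule g_pos[OF assms tpos])
  have "(ellE x - ellK x)^2 / x * (x^2 * ellK x) - NN x * (x^2 * ((ellE x - (1 - x) * ellK x) / (2 * x * (1 - x))) + 2 * x * ellK x) > 0"
    unfolding NN_def fd_alg[OF K assms(1) x1] using g assms K unfolding tt_def
    by (intro mult_pos_pos divide_pos_pos) auto
  then have "((ellE x - ellK x)^2 / x * (x^2 * ellK x) - NN x * (x^2 * ((ellE x - (1 - x) * ellK x) / (2 * x * (1 - x))) + 2 * x * ellK x))
      / ((x^2 * ellK x) * (x^2 * ellK x)) > 0" using nz K assms by (intro divide_pos_pos mult_pos_pos) auto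
  then show ?thesis using d by blast
qed

lemma ff_mono: "strict_mono_on {0<..<3/5} ff"
proof (rule strict_mono_onI)
  fix a b :: real assume a: "a \<in> {0<..<3/5}" and b: "b \<in> {0<..<3/5}" and ab: "a < b"
  show "ff a < ff b"
    by (rule DERIV_pos_imp_increasing[OF ab]) (use a b in \<open>auto intro!: ff_deriv\<close>)
qed


lemma NN_lower: assumes "0 < x" "x < 1" shows "NN x \<ge> pi^2 / 32 * x^2"
proof -
  define M where "M y = NN y - pi^2 / 32 * y^2" for y
  have c: "continuous_on {0..x} M"
  proof (rule continuous_at_imp_continuous_on, rule ballI)
    fix y assume y: "y \<in> {0..x}"
    then have y1: "-1 < y" "y < 1" using assms by auto
    show "isCont M y" unfolding M_def NN_def
      using E_cont[OF y1] K_cont[OF y1] by (intro continuous_intros) auto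
  qed
  have dM: "(M has_real_derivative ((ellE z - ellK z)^2 / z - pi^2 / 32 * (2 * z))) (at z)" if "0 < z" "z < 1" for z
  proof -
    have "((\<lambda>y. y^2) has_real_derivative 2 * z) (at z)" by (auto intro!: derivative_eq_intros)
    then show ?thesis unfolding M_def[abs_def]
      by (intro DERIV_diff DERIV_cmult NN_deriv that)
  qed
  obtain l z where z: "0 < z" "z < x" and dz: "DERIV M z :> l" and eq: "M x - M 0 = (x - 0) * l"
    using MVT[OF assms(1) c] dM assms by (metis less_trans real_differentiable_def)
  have z1: "z < 1" using z assms by simp
  have l: "l = (ellE z - ellK z)^2 / z - pi^2 / 32 * (2 * z)" using DERIV_unique[OF dz dM[OF z(1) z1]] .
  have gap: "ellK z - ellE z \<ge> pi / 4 * z" using KE_gap[of z] z z1 by simp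
  have "(pi / 4 * z)^2 \<le> (ellK z - ellE z)^2" using gap z by (intro power_mono) auto
  then have "pi^2 / 16 * z^2 \<le> (ellE z - ellK z)^2" by (simp add: power2_eq_square algebra_simps)
  then have "pi^2 / 16 * z \<le> (ellE z - ellK z)^2 / z" using z by (simp add: field_simps power2_eq_square)
  then have "l \<ge> 0" unfolding l by (simp add: mult.commute)
  moreover have "M 0 = 0" unfolding M_def NN_def by (simp add: K0 E0)
  ultimately have "M x \<ge> 0" using eq assms by simp
  then show ?thesis unfolding M_def by simp
qed

lemma ff_lower: assumes "0 < x" "x < 3/5" shows "ff x \<ge> pi / 16"
proof -
  have lim: "((\<lambda>y. pi^2 / (32 * ellK y)) \<longlongrightarrow> pi^2 / (32 * (pi / 2))) (at_right 0)"
  proof -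
    have "(ellK \<longlongrightarrow> ellK 0) (at 0)" using K_cont[of 0] isCont_def by auto
    then have "(ellK \<longlongrightarrow> pi / 2) (at_right 0)"
      unfolding K0 by (rule tendsto_mono[OF at_le, rotated]) auto
    then show ?thesis by (intro tendsto_intros) auto
  qed
  have ev: "eventually (\<lambda>y. pi^2 / (32 * ellK y) \<le> ff x) (at_right 0)"
  proof -
    have "eventually (\<lambda>y. y \<in> {0<..<x}) (at_right 0)"
      using assms(1) by (auto simp: eventually_at_right_field intro!: exI[of _ x])
    moreover have "pi^2 / (32 * ellK y) \<le> ff x" if y: "y \<in> {0<..<x}" for y
    proof -
      have y1: "0 < y" "y < 1" "y < 3/5" using y assms by auto
      have K: "ellK y > 0" using K_pos y1 by simp
      have "ff y < ff x" using ff_mono y assms by (auto simp: strict_mono_on_def)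
      moreover have "pi^2 / (32 * ellK y) \<le> ff y"
      proof -
        have "pi^2 / (32 * ellK y) = (pi^2 / 32 * y^2) / (y^2 * ellK y)" using y1 K by (simp add: field_simps)
        also have "\<dots> \<le> NN y / (y^2 * ellK y)" using NN_lower[of y] y1 K
          by (intro divide_right_mono) auto
        finally show ?thesis unfolding ff_def .
      qed
      ultimately show ?thesis by simp
    qed
    ultimately show ?thesis by (auto elim: eventually_mono)
  qed
  have "pi^2 / (32 * (pi / 2)) \<le> ff x"
    by (rule tendsto_le[OF _ tendsto_const lim ev]) simp
  moreover have "pi^2 / (32 * (pi / 2)) = pi / 16" by (simp add: power2_eq_square)
  ultimately show ?thesis by simp
qed

theorem mainTheorem8:
  fixes \<alpha> :: real
  defines "\<alpha> \<equiv> 8 / 97 * (11 - 2 * sqrt 6)"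
  shows "strict_mono_on {0<..<\<alpha>}
           (\<lambda>x. ((ellE x)\<^sup>2 - (1 - x) * (ellK x)\<^sup>2) / (x\<^sup>2 * ellK x))
         \<and> (\<forall>x\<in>{0<..<\<alpha>}. (ellE x)\<^sup>2 - (1 - x) * (ellK x)\<^sup>2 \<ge> pi / 16 * x\<^sup>2 * ellK x)"
proof -
  have s6: "sqrt 6 > 2" by (simp add: real_less_rsqrt)
  have "\<alpha> < 8 / 97 * 7" unfolding \<alpha>_def using s6 by simp
  then have a: "\<alpha> < 3/5" by simp
  have e: "(\<lambda>x. ((ellE x)\<^sup>2 - (1 - x) * (ellK x)\<^sup>2) / (x\<^sup>2 * ellK x)) = ff"
    by (auto simp: ff_def NN_def)
  have sub: "{0<..<\<alpha>} \<subseteq> {0<..<3/5}" using a by auto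
  have P1: "strict_mono_on {0<..<\<alpha>} ff"
  proof (rule strict_mono_onI)
    fix r s assume r: "r \<in> {0<..<\<alpha>}" and s: "s \<in> {0<..<\<alpha>}" and rs: "r < s"
    have "r \<in> {0<..<3/5}" "s \<in> {0<..<3/5}" using r s sub by auto
    then show "ff r < ff s" using ff_mono rs by (auto simp: strict_mono_on_def)
  qed
  have P2: "(ellE x)\<^sup>2 - (1 - x) * (ellK x)\<^sup>2 \<ge> pi / 16 * x\<^sup>2 * ellK x" if x: "x \<in> {0<..<\<alpha>}" for x
  proof -
    have x1: "0 < x" "x < 3/5" using x sub by auto
    have K: "ellK x > 0" using K_pos x1 by simp
    have "pi / 16 \<le> ff x" by (rule ff_lower[OF x1])
    then have "pi / 16 * (x^2 * ellK x) \<le> ff x * (x^2 * ellK x)" using K x1 by (intro mult_right_mono) auto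
    also have "\<dots> = NN x" unfolding ff_def using K x1 by simp
    finally show ?thesis unfolding NN_def by (simp add: mult.assoc)
  qed
  show ?thesis unfolding e using P1 P2 by blast
qed

end
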